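(* For each $c_1\in\mathbb{R}$ there exists $c_2>0$ such that for all $W\in\mathcal{C}_0$, $\mathcal{L}(W)\le c_1$ implies $\|W_{\rm sh}-W\|_{L^2}\le c_2$.
   Context: Let $\Phi:\mathbb{R}\to\mathbb{R}$ be twice continuously differentiable on $[-1,1]$ with: $\Phi'(-1)=-1$, $\Phi'(1)=1$; $\Phi''\ge0$ on $[-1,1]$; $\Phi(-1)=\Phi(1)$; $\Phi''(-1)<1$, $\Phi''(1)<1$; and $g_\Phi(w):=\int_{-1}^w(v-\Phi'(v))\,dv>0$ for all $w\in(-1,1)$. $(\mathcal{A}U)(\varphi)=\int_{\varphi-1/2}^{\varphi+1/2}U(s)\,ds$; $W_{\rm sh}(\varphi)=\mathrm{sgn}(\varphi)$; $\mathcal{H}=\{W\text{ measurable}: W_{\rm sh}-W\in L^2(\mathbb{R})\}$; $\mathcal{L}(W)=\int_{\mathbb{R}}(\tfrac12W^2-\Phi(\mathcal{A}W))-(\tfrac12W_{\rm sh}^2-\Phi(\mathcal{A}W_{\rm sh}))\,d\varphi$. $\mathcal{C}$ is the set of $W\in\mathcal{H}$ that are a.e. equal to a nondecreasing function with $W(\varphi)\to\pm1$ as $\varphi\to\pm\infty$; $\mathcal{C}_0$ is the set of $W\in\mathcal{C}$ with $0\le W\le1$ a.e. on $[0,\infty)$ and $-1\le W\le0$ a.e. on $(-\infty,0]$. *)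

theory Defs
  imports "HOL-Analysis.Analysis"
begin

definition avgA :: "(real \<Rightarrow> real) \<Rightarrow> real \<Rightarrow> real" where
  "avgA U \<phi> = (LINT s:{\<phi> - 1/2 .. \<phi> + 1/2}|lborel. U s)"

definition Wsh :: "real \<Rightarrow> real" where
  "Wsh \<phi> = sgn \<phi>"

definition HH :: "(real \<Rightarrow> real) set" where
  "HH = {W. W \<in> borel_measurable lborel \<and>
             integrable lborel (\<lambda>\<phi>. (Wsh \<phi> - W \<phi>)\<^sup>2)}"

definition dist_sh :: "(real \<Rightarrow> real) \<Rightarrow> real" where
  "dist_sh W = sqrt (LINT \<phi>|lborel. (Wsh \<phi> - W \<phi>)\<^sup>2)"

definition energyL :: "(real \<Rightarrow> real) \<Rightarrow> (real \<Rightarrow> real) \<Rightarrow> real" where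
  "energyL \<Phi> W = (LINT \<phi>|lborel.
      (1/2 * (W \<phi>)\<^sup>2 - \<Phi> (avgA W \<phi>)) - (1/2 * (Wsh \<phi>)\<^sup>2 - \<Phi> (avgA Wsh \<phi>)))"

definition CC :: "(real \<Rightarrow> real) set" where
  "CC = {W \<in> HH. \<exists>f::real \<Rightarrow> real. mono f \<and> (AE \<phi> in lborel. W \<phi> = f \<phi>) \<and>
            (f \<longlongrightarrow> 1) at_top \<and> (f \<longlongrightarrow> -1) at_bot}"

definition CC0 :: "(real \<Rightarrow> real) set" where
  "CC0 = {W \<in> CC. (AE \<phi> in lborel. \<phi> \<ge> 0 \<longrightarrow> 0 \<le> W \<phi> \<and> W \<phi> \<le> 1) \<and>
                   (AE \<phi> in lborel. \<phi> \<le> 0 \<longrightarrow> -1 \<le> W \<phi> \<and> W \<phi> \<le> 0)}"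

end

theory Submission
  imports Defs
begin

lemma mono_bounded:
  fixes f :: "real \<Rightarrow> real"
  assumes "mono f" "(f \<longlongrightarrow> 1) at_top" "(f \<longlongrightarrow> -1) at_bot"
  shows "-1 \<le> f x" "f x \<le> 1"
proof -
  have "eventually (\<lambda>y. f x \<le> f y) at_top"
    using eventually_ge_at_top[of x] by eventually_elim (use assms(1) in \<open>auto simp: mono_def\<close>)
  from tendsto_lowerbound[OF assms(2) this] show "f x \<le> 1" by simp
  have "eventually (\<lambda>y. f y \<le> f x) at_bot"
    using eventually_le_at_bot[of x] by eventually_elim (use assms(1) in \<open>auto simp: mono_def\<close>)
  from tendsto_upperbound[OF assms(3) this] show "-1 \<le> f x" by simp
qed

lemma meas_mono: "mono f \<Longrightarrow> (f :: real \<Rightarrow> real) \<in> borel_measurable lborel"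
  using borel_measurable_mono by simp

lemma sint_bounded:
  fixes f :: "real \<Rightarrow> real"
  assumes [measurable]: "f \<in> borel_measurable lborel" and b: "\<And>x. \<bar>f x\<bar> \<le> B"
  shows "integrable lborel (\<lambda>x. indicator {a..b} x * f x)"
proof -
  have i: "integrable lborel (\<lambda>x. B * indicator {a..b} x :: real)"
    by (intro integrable_mult_right) (auto simp: emeasure_lborel_Icc_eq)
  have "B \<ge> 0" using b[of 0] by linarith
  hence bnd: "AE x in lborel. norm (indicator {a..b} x * f x) \<le> norm (B * indicator {a..b} x :: real)"
    using b by (auto simp: indicator_def)
  show ?thesis by (rule Bochner_Integration.integrable_bound[OF i _ bnd]) measurable
qed

lemma avg_bounds:
  fixes f :: "real \<Rightarrow> real"
  assumes m: "mono f" and b: "\<And>x. \<bar>f x\<bar> \<le> 1"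
  shows "f (\<phi> - 1/2) \<le> avgA f \<phi>" "avgA f \<phi> \<le> f (\<phi> + 1/2)"
proof -
  have [measurable]: "f \<in> borel_measurable lborel" using meas_mono[OF m] .
  have si: "set_integrable lborel {\<phi>-1/2..\<phi>+1/2} f"
    unfolding set_integrable_def using sint_bounded[OF _ b] by simp
  have sc: "set_integrable lborel {\<phi>-1/2..\<phi>+1/2} (\<lambda>_. c)" for c :: real
  proof -
    have "integrable lborel (\<lambda>x. indicator {\<phi>-1/2..\<phi>+1/2} x * c)"
      by (rule sint_bounded[of "\<lambda>_. c" "\<bar>c\<bar>"]) auto
    thus ?thesis unfolding set_integrable_def by simp
  qed
  have ml: "measure lborel {\<phi>-1/2..\<phi>+1/2} = 1" by (simp add: measure_def)
  have ic: "(LINT s:{\<phi>-1/2..\<phi>+1/2}|lborel. c) = c" for c :: real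
    using set_integral_const[of "{\<phi>-1/2..\<phi>+1/2}" lborel c] ml by simp
  have "(LINT s:{\<phi>-1/2..\<phi>+1/2}|lborel. f (\<phi> - 1/2)) \<le> (LINT s:{\<phi>-1/2..\<phi>+1/2}|lborel. f s)"
    by (rule set_integral_mono[OF sc si]) (simp add: monoD[OF m])
  thus "f (\<phi> - 1/2) \<le> avgA f \<phi>" unfolding avgA_def ic .
  have "(LINT s:{\<phi>-1/2..\<phi>+1/2}|lborel. f s) \<le> (LINT s:{\<phi>-1/2..\<phi>+1/2}|lborel. f (\<phi> + 1/2))"
    by (rule set_integral_mono[OF si sc]) (simp add: monoD[OF m])
  thus "avgA f \<phi> \<le> f (\<phi> + 1/2)" unfolding avgA_def ic .
qed

lemma shift_int:
  fixes g :: "real \<Rightarrow> real"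
  shows "(\<integral>x. g x \<partial>lborel) = (\<integral>x. g (t + x) \<partial>lborel)"
  using lborel_integral_real_affine[of 1 g t] by simp

lemma avg_shift:
  fixes f :: "real \<Rightarrow> real"
  shows "avgA f \<phi> = (\<integral>x. indicator {-1/2..1/2} x * f (\<phi> + x) \<partial>lborel)"
proof -
  have "avgA f \<phi> = (\<integral>x. indicator {\<phi>-1/2..\<phi>+1/2} x * f x \<partial>lborel)"
    unfolding avgA_def set_lebesgue_integral_def by simp
  also have "\<dots> = (\<integral>x. indicator {\<phi>-1/2..\<phi>+1/2} (\<phi> + x) * f (\<phi> + x) \<partial>lborel)"
    by (rule shift_int)
  also have "\<dots> = (\<integral>x. indicator {-1/2..1/2} x * f (\<phi> + x) \<partial>lborel)"
    by (intro Bochner_Integration.integral_cong) (auto simp: indicator_def)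
  finally show ?thesis .
qed

lemma avg_mono:
  fixes f :: "real \<Rightarrow> real"
  assumes m: "mono f" and b: "\<And>x. \<bar>f x\<bar> \<le> 1"
  shows "mono (avgA f)"
proof (rule monoI)
  fix x y :: real assume xy: "x \<le> y"
  have [measurable]: "f \<in> borel_measurable lborel" using meas_mono[OF m] .
  have i: "integrable lborel (\<lambda>t. indicator {-1/2..1/2} t * f (z + t))" for z
    by (rule sint_bounded[of _ 1]) (use b in auto)
  show "avgA f x \<le> avgA f y"
    unfolding avg_shift
    by (rule integral_mono[OF i i]) (use xy in \<open>auto simp: indicator_def intro!: monoD[OF m]\<close>)
qed


lemma D_integrable:
  fixes f :: "real \<Rightarrow> real"
  assumes m: "mono f" and b: "\<And>x. \<bar>f x\<bar> \<le> 1"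
  shows "integrable lborel (\<lambda>x. f (x + 1/2) - f (x - 1/2))"
    "(\<integral>x. f (x + 1/2) - f (x - 1/2) \<partial>lborel) \<le> 2"
proof -
  have fm[measurable]: "f \<in> borel_measurable lborel" using meas_mono[OF m] .
  define D where "D x = f (x + 1/2) - f (x - 1/2)" for x
  have Dm[measurable]: "D \<in> borel_measurable lborel" unfolding D_def by measurable
  have D0: "D x \<ge> 0" for x unfolding D_def using monoD[OF m, of "x - 1/2" "x + 1/2"] by simp
  have Db: "\<bar>D x\<bar> \<le> 2" for x unfolding D_def using b[of "x+1/2"] b[of "x-1/2"] by (simp add: abs_le_iff)
  have Ti: "integrable lborel (\<lambda>x. indicator {-real n..real n} x * D x)" for n :: nat
    by (rule sint_bounded[OF Dm Db])
  have Tle: "(\<integral>x. indicator {-real n..real n} x * D x \<partial>lborel) \<le> 2" for n :: nat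
  proof -
    define A where "A = {-real n + 1/2..real n + 1/2}"
    define B where "B = {-real n - 1/2..real n - 1/2}"
    define C where "C = {real n - 1/2..real n + 1/2}"
    define C' where "C' = {-real n - 1/2..-real n + 1/2}"
    have fp[measurable]: "(\<lambda>x. f (x + 1/2)) \<in> borel_measurable lborel" by measurable
    have fmn[measurable]: "(\<lambda>x. f (x - 1/2)) \<in> borel_measurable lborel" by measurable
    have i1: "integrable lborel (\<lambda>x. indicator {-real n..real n} x * f (x + 1/2))"
      by (rule sint_bounded[OF fp b])
    have i2: "integrable lborel (\<lambda>x. indicator {-real n..real n} x * f (x - 1/2))"
      by (rule sint_bounded[OF fmn b])
    have iA: "integrable lborel (\<lambda>x. indicator A x * f x)" unfolding A_def by (rule sint_bounded[OF fm b])
    have iB: "integrable lborel (\<lambda>x. indicator B x * f x)" unfolding B_def by (rule sint_bounded[OF fm b])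
    have e1: "(\<integral>x. indicator {-real n..real n} x * f (x + 1/2) \<partial>lborel) = (\<integral>x. indicator A x * f x \<partial>lborel)"
    proof -
      have "(\<integral>x. indicator A x * f x \<partial>lborel) = (\<integral>x. indicator A (1/2 + x) * f (1/2 + x) \<partial>lborel)"
        by (rule shift_int)
      also have "\<dots> = (\<integral>x. indicator {-real n..real n} x * f (x + 1/2) \<partial>lborel)"
        by (intro Bochner_Integration.integral_cong) (auto simp: A_def indicator_def add.commute)
      finally show ?thesis by simp
    qed
    have e2: "(\<integral>x. indicator {-real n..real n} x * f (x - 1/2) \<partial>lborel) = (\<integral>x. indicator B x * f x \<partial>lborel)"
    proof -
      have "(\<integral>x. indicator B x * f x \<partial>lborel) = (\<integral>x. indicator B (-1/2 + x) * f (-1/2 + x) \<partial>lborel)"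
        by (rule shift_int)
      also have "\<dots> = (\<integral>x. indicator {-real n..real n} x * f (x - 1/2) \<partial>lborel)"
        by (intro Bochner_Integration.integral_cong) (auto simp: B_def indicator_def)
      finally show ?thesis by simp
    qed
    have "(\<integral>x. indicator {-real n..real n} x * D x \<partial>lborel)
        = (\<integral>x. indicator {-real n..real n} x * f (x + 1/2) - indicator {-real n..real n} x * f (x - 1/2) \<partial>lborel)"
      unfolding D_def by (simp add: algebra_simps)
    also have "\<dots> = (\<integral>x. indicator A x * f x \<partial>lborel) - (\<integral>x. indicator B x * f x \<partial>lborel)"
      using Bochner_Integration.integral_diff[OF i1 i2] e1 e2 by simp
    also have "\<dots> = (\<integral>x. indicator A x * f x - indicator B x * f x \<partial>lborel)"
      using Bochner_Integration.integral_diff[OF iA iB] by simp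
    also have "\<dots> \<le> (\<integral>x. indicator C x + indicator C' x \<partial>lborel)"
    proof (rule integral_mono)
      show "integrable lborel (\<lambda>x. indicator A x * f x - indicator B x * f x)" using iA iB by simp
      show "integrable lborel (\<lambda>x. indicator C x + indicator C' x :: real)"
        unfolding C_def C'_def by (intro Bochner_Integration.integrable_add integrable_real_indicator) auto
      fix x :: real
      have bx: "-1 \<le> f x" "f x \<le> 1" using b[of x] by (auto simp: abs_le_iff)
      show "indicator A x * f x - indicator B x * f x \<le> indicator C x + indicator C' x"
      proof (cases "x \<in> A")
        case True
        show ?thesis
        proof (cases "x \<in> B")
          case True
          with \<open>x \<in> A\<close> show ?thesis by (simp add: indicator_def)
        next
          case False
          with \<open>x \<in> A\<close> have "x \<in> C" unfolding A_def B_def C_def by auto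
          with \<open>x \<in> A\<close> False bx show ?thesis by (simp add: indicator_def)
        qed
      next
        case False
        show ?thesis
        proof (cases "x \<in> B")
          case True
          with \<open>x \<notin> A\<close> have "x \<in> C'" unfolding A_def B_def C'_def by auto
          with \<open>x \<notin> A\<close> True bx show ?thesis by (simp add: indicator_def)
        next
          case False
          with \<open>x \<notin> A\<close> show ?thesis by (simp add: indicator_def)
        qed
      qed
    qed
    also have "\<dots> = 2"
    proof -
      have "(\<integral>x. indicator C x + indicator C' x \<partial>lborel) = measure lborel C + measure lborel C'"
        unfolding C_def C'_def
        by (subst Bochner_Integration.integral_add) (auto intro!: integrable_real_indicator)
      also have "\<dots> = 2" unfolding C_def C'_def by (simp add: measure_def)
      finally show ?thesis .
    qed
    finally show ?thesis .
  qed
  define F where "F n x = ennreal (indicator {-real n..real n} x * D x)" for n :: nat and x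
  have incF: "incseq F"
  proof (rule incseq_SucI, rule le_funI)
    fix n x
    show "F n x \<le> F (Suc n) x" unfolding F_def using D0[of x]
      by (intro ennreal_leI) (auto simp: indicator_def)
  qed
  have Fm: "F n \<in> borel_measurable lborel" for n unfolding F_def by measurable
  have Flim: "(\<lambda>n. F n x) \<longlonglongrightarrow> ennreal (D x)" for x
  proof (rule tendsto_eventually)
    show "\<forall>\<^sub>F n in sequentially. F n x = ennreal (D x)"
      unfolding eventually_sequentially
    proof (intro exI allI impI)
      fix n assume "nat \<lceil>\<bar>x\<bar>\<rceil> \<le> n"
      hence "\<bar>x\<bar> \<le> real n" by linarith
      thus "F n x = ennreal (D x)" unfolding F_def by (simp add: indicator_def abs_le_iff)
    qed
  qed
  have lim: "(\<lambda>n. integral\<^sup>N lborel (F n)) \<longlonglongrightarrow> (\<integral>\<^sup>+ x. ennreal (D x) \<partial>lborel)"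
    by (rule nn_integral_LIMSEQ[OF incF Fm Flim])
  have Fle: "integral\<^sup>N lborel (F n) \<le> 2" for n
  proof -
    have "integral\<^sup>N lborel (F n) = ennreal (\<integral>x. indicator {-real n..real n} x * D x \<partial>lborel)"
      unfolding F_def by (rule nn_integral_eq_integral[OF Ti]) (simp add: D0)
    also have "\<dots> \<le> ennreal 2" using Tle[of n] by (intro ennreal_leI)
    finally show ?thesis by simp
  qed
  have nn: "(\<integral>\<^sup>+ x. ennreal (D x) \<partial>lborel) \<le> 2"
    by (rule LIMSEQ_le_const2[OF lim]) (use Fle in auto)
  have iD: "integrable lborel D"
    by (rule integrableI_nonneg[OF Dm]) (use D0 nn in \<open>auto simp: le_less_trans\<close>)
  thus "integrable lborel (\<lambda>x. f (x + 1/2) - f (x - 1/2))" unfolding D_def by simp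
  have "ennreal (\<integral>x. D x \<partial>lborel) \<le> ennreal 2"
    using nn nn_integral_eq_integral[OF iD] D0 by simp
  hence "(\<integral>x. D x \<partial>lborel) \<le> 2" using ennreal_le_iff2[of "\<integral>x. D x \<partial>lborel" 2] by simp
  thus "(\<integral>x. f (x + 1/2) - f (x - 1/2) \<partial>lborel) \<le> 2" unfolding D_def by simp
qed

lemma Wsh_mono: "mono Wsh"
  by (rule monoI) (auto simp: Wsh_def sgn_real_def)

lemma Wsh_lim: "(Wsh \<longlongrightarrow> 1) at_top" "(Wsh \<longlongrightarrow> -1) at_bot"
proof -
  show "(Wsh \<longlongrightarrow> 1) at_top"
    by (rule tendsto_eventually) (use eventually_gt_at_top[of 0] in \<open>eventually_elim, simp add: Wsh_def\<close>)
  show "(Wsh \<longlongrightarrow> -1) at_bot"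
    by (rule tendsto_eventually) (use eventually_gt_at_bot[of 0] in \<open>eventually_elim, simp add: Wsh_def\<close>)
qed

lemma Wsh_bound: "\<bar>Wsh x\<bar> \<le> 1" by (simp add: Wsh_def sgn_real_def)

lemma avg_Wsh: assumes "\<bar>\<phi>\<bar> > 1/2" shows "avgA Wsh \<phi> = Wsh \<phi>"
proof -
  have "Wsh (\<phi> - 1/2) = Wsh \<phi>" "Wsh (\<phi> + 1/2) = Wsh \<phi>" using assms by (auto simp: Wsh_def sgn_real_def)
  with avg_bounds[OF Wsh_mono Wsh_bound, of \<phi>] show ?thesis by linarith
qed

lemma AE_exists_in:
  assumes "AE x in lborel. P x" "a < (b::real)"
  shows "\<exists>x\<in>{a<..<b}. P x"
proof (rule ccontr)
  assume "\<not> ?thesis"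
  hence sub: "{a<..<b} \<subseteq> {x \<in> space lborel. \<not> P x}" by auto
  from assms(1) obtain N where N: "{x \<in> space lborel. \<not> P x} \<subseteq> N" "emeasure lborel N = 0" "N \<in> sets lborel"
    by (rule AE_E)
  have "emeasure lborel {a<..<b} \<le> emeasure lborel N"
    by (rule emeasure_mono) (use sub N in auto)
  with N assms(2) show False by simp
qed


lemma incr_helper:
  fixes g g' :: "real \<Rightarrow> real"
  assumes ab: "a \<le> b" and sub: "{a..b} \<subseteq> {-1..1}"
    and dg: "\<And>x. x \<in> {-1..1} \<Longrightarrow> (g has_real_derivative g' x) (at x within {-1..1})"
    and pos: "\<And>x. a < x \<Longrightarrow> x < b \<Longrightarrow> g' x \<ge> 0"
  shows "g a \<le> g b"
proof (rule DERIV_nonneg_imp_increasing_open[OF ab])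
  fix x assume x: "a < x" "x < b"
  have "x \<in> {-1<..<1}" using x sub ab by auto
  hence "at x within {-1..1} = at x" using at_within_Icc_at by auto
  with dg[of x] x sub ab have "(g has_real_derivative g' x) (at x)" by auto
  with pos x show "\<exists>y. (g has_real_derivative y) (at x) \<and> 0 \<le> y" by blast
next
  show "continuous_on {a..b} g"
    using DERIV_continuous_on[of "{-1..1}" g g', OF dg] sub continuous_on_subset by blast
qed

lemma decr_helper:
  fixes g g' :: "real \<Rightarrow> real"
  assumes ab: "a \<le> b" and sub: "{a..b} \<subseteq> {-1..1}"
    and dg: "\<And>x. x \<in> {-1..1} \<Longrightarrow> (g has_real_derivative g' x) (at x within {-1..1})"
    and neg: "\<And>x. a < x \<Longrightarrow> x < b \<Longrightarrow> g' x \<le> 0"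
  shows "g b \<le> g a"
proof -
  have "(\<lambda>x. - g x) a \<le> (\<lambda>x. - g x) b"
    by (rule incr_helper[OF ab sub, of _ "\<lambda>x. - g' x"]) (auto intro!: derivative_eq_intros dg simp: neg)
  thus ?thesis by simp
qed

context
  fixes \<Phi> \<Phi>' \<Phi>'' :: "real \<Rightarrow> real"
  assumes d1: "\<And>x. x \<in> {-1..1} \<Longrightarrow> (\<Phi> has_real_derivative \<Phi>' x) (at x within {-1..1})"
      and d2: "\<And>x. x \<in> {-1..1} \<Longrightarrow> (\<Phi>' has_real_derivative \<Phi>'' x) (at x within {-1..1})"
      and d2c: "continuous_on {-1..1} \<Phi>''"
      and dm1: "\<Phi>' (-1) = -1"
      and dp1: "\<Phi>' 1 = 1"
      and conv: "\<And>x. x \<in> {-1..1} \<Longrightarrow> \<Phi>'' x \<ge> 0"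
      and sym: "\<Phi> (-1) = \<Phi> 1"
      and ddm1: "\<Phi>'' (-1) < 1"
      and ddp1: "\<Phi>'' 1 < 1"
      and gpos: "\<And>w. w \<in> {-1<..<1} \<Longrightarrow> integral {-1..w} (\<lambda>v. v - \<Phi>' v) > 0"
begin

lemma dPhi_bound: assumes "x \<in> {-1..1}" shows "\<bar>\<Phi>' x\<bar> \<le> 1"
proof -
  have "\<Phi>' (-1) \<le> \<Phi>' x"
    by (rule incr_helper[of _ _ _ \<Phi>'']) (use assms d2 conv in auto)
  moreover have "\<Phi>' x \<le> \<Phi>' 1"
    by (rule incr_helper[of _ _ _ \<Phi>'']) (use assms d2 conv in auto)
  ultimately show ?thesis using dm1 dp1 by auto
qed

lemma Phi_lip: assumes "x \<in> {-1..1}" "y \<in> {-1..1}" shows "\<bar>\<Phi> x - \<Phi> y\<bar> \<le> \<bar>x - y\<bar>"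
  using field_differentiable_bound[of "{-1..1}" \<Phi> \<Phi>' 1 x y] d1 dPhi_bound assms
  by (auto simp: convex_real_interval)

definition GG :: "real \<Rightarrow> real" where "GG w = w\<^sup>2/2 - \<Phi> w - 1/2 + \<Phi> 1"

lemma dGG: "x \<in> {-1..1} \<Longrightarrow> (GG has_real_derivative (x - \<Phi>' x)) (at x within {-1..1})"
  unfolding GG_def by (auto intro!: derivative_eq_intros d1)

lemma GG_upper1: assumes "w \<in> {-1..1}" shows "GG w \<le> (1 - w)\<^sup>2 / 2"
proof -
  have "(\<lambda>w. 1 - w + \<Phi> w - \<Phi> 1) 1 \<le> (\<lambda>w. 1 - w + \<Phi> w - \<Phi> 1) w"
  proof (rule decr_helper[of w 1 "\<lambda>w. 1 - w + \<Phi> w - \<Phi> 1" "\<lambda>x. \<Phi>' x - 1"])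
    fix x :: real assume "w < x" "x < 1"
    hence "x \<in> {-1..1}" using assms by auto
    from dPhi_bound[OF this] show "\<Phi>' x - 1 \<le> 0" by (simp add: abs_le_iff)
  qed (use assms in \<open>auto intro!: derivative_eq_intros d1\<close>)
  thus ?thesis unfolding GG_def by (simp add: power2_eq_square algebra_simps)
qed

lemma GG_upper2: assumes "w \<in> {-1..1}" shows "GG w \<le> (1 + w)\<^sup>2 / 2"
proof -
  have "(\<lambda>w. 1 + w + \<Phi> w - \<Phi> (-1)) (-1) \<le> (\<lambda>w. 1 + w + \<Phi> w - \<Phi> (-1)) w"
  proof (rule incr_helper[of "-1" w "\<lambda>w. 1 + w + \<Phi> w - \<Phi> (-1)" "\<lambda>x. 1 + \<Phi>' x"])
    fix x :: real assume "-1 < x" "x < w"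
    hence "x \<in> {-1..1}" using assms by auto
    from dPhi_bound[OF this] show "0 \<le> 1 + \<Phi>' x" by (simp add: abs_le_iff)
  qed (use assms in \<open>auto intro!: derivative_eq_intros d1\<close>)
  thus ?thesis unfolding GG_def using sym by (simp add: power2_eq_square algebra_simps)
qed


lemma GG_int: assumes "w \<in> {-1..1}" shows "integral {-1..w} (\<lambda>v. v - \<Phi>' v) = GG w"
proof -
  have "((\<lambda>v. v - \<Phi>' v) has_integral (GG w - GG (-1))) {-1..w}"
    by (rule fundamental_theorem_of_calculus)
       (use assms in \<open>auto simp: has_real_derivative_iff_has_vector_derivative[symmetric]
          intro!: DERIV_subset[OF dGG]\<close>)
  moreover have "GG (-1) = 0" unfolding GG_def using sym by simp
  ultimately show ?thesis by (simp add: integral_unique)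
qed

lemma GG_pos: assumes "w \<in> {-1<..<1}" shows "GG w > 0"
proof -
  have "w \<in> {-1..1}" using assms by auto
  from GG_int[OF this] gpos[OF assms] show ?thesis by simp
qed

lemma GG_cont: "continuous_on {-1..1} GG"
  using DERIV_continuous_on[OF dGG] by blast

lemma near1: obtains \<delta> \<epsilon> where "\<delta> > 0" "\<epsilon> > 0" "\<delta> \<le> 1"
  "\<And>w. w \<in> {1-\<delta>..1} \<Longrightarrow> GG w \<ge> \<epsilon> * (1 - w)\<^sup>2"
proof -
  define e where "e = (1 - \<Phi>'' 1) / 2"
  have e: "e > 0" using ddp1 e_def by auto
  have "\<exists>d>0. \<forall>x\<in>{-1..1}. dist x 1 < d \<longrightarrow> dist (\<Phi>'' x) (\<Phi>'' 1) < e"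
    using d2c e unfolding continuous_on_iff by force
  then obtain d where d: "d > 0" "\<And>x. x \<in> {-1..1} \<Longrightarrow> dist x 1 < d \<Longrightarrow> dist (\<Phi>'' x) (\<Phi>'' 1) < e"
    by blast
  define \<delta> where "\<delta> = min (d/2) 1"
  have \<delta>: "\<delta> > 0" "\<delta> \<le> 1" "\<delta> < d" using d by (auto simp: \<delta>_def)
  have bd: "\<Phi>'' x \<le> 1 - e" if "x \<in> {1-\<delta>..1}" for x
  proof -
    have "x \<in> {-1..1}" "dist x 1 < d" using that \<delta> by (auto simp: dist_real_def)
    from d(2)[OF this] have "\<bar>\<Phi>'' x - \<Phi>'' 1\<bar> < e" by (simp add: dist_real_def)
    hence "\<Phi>'' x - \<Phi>'' 1 < e" by (metis abs_less_iff)
    thus ?thesis by (simp add: e_def field_simps)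
  qed
  have j: "\<Phi>' v - v - e * (1 - v) \<ge> 0" if v: "v \<in> {1-\<delta>..1}" for v
  proof -
    have bd': "\<Phi>'' x - 1 + e \<le> 0" if "v < x" "x < 1" for x using bd[of x] that v by auto
    have "(\<lambda>v. \<Phi>' v - v - e * (1 - v)) 1 \<le> (\<lambda>v. \<Phi>' v - v - e * (1 - v)) v"
      by (rule decr_helper[of v 1 "\<lambda>v. \<Phi>' v - v - e * (1 - v)" "\<lambda>x. \<Phi>'' x - 1 + e"])
         (use v \<delta> bd' in \<open>auto intro!: derivative_eq_intros d2\<close>)
    thus ?thesis using dp1 by simp
  qed
  have k: "GG w \<ge> e/2 * (1 - w)\<^sup>2" if w: "w \<in> {1-\<delta>..1}" for w
  proof -
    have "(\<lambda>w. GG w - e/2 * (1 - w)\<^sup>2) 1 \<le> (\<lambda>w. GG w - e/2 * (1 - w)\<^sup>2) w"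
      by (rule decr_helper[of w 1 "\<lambda>w. GG w - e/2 * (1 - w)\<^sup>2" "\<lambda>x. x - \<Phi>' x + e * (1 - x)"])
         (use w \<delta> j in \<open>auto intro!: derivative_eq_intros dGG simp: field_simps\<close>)
    moreover have "GG 1 = 0" by (simp add: GG_def)
    ultimately show ?thesis by simp
  qed
  show ?thesis using that[of \<delta> "e/2"] \<delta> e k by auto
qed

lemma nearm1: obtains \<delta> \<epsilon> where "\<delta> > 0" "\<epsilon> > 0" "\<delta> \<le> 1"
  "\<And>w. w \<in> {-1..-1+\<delta>} \<Longrightarrow> GG w \<ge> \<epsilon> * (1 + w)\<^sup>2"
proof -
  define e where "e = (1 - \<Phi>'' (-1)) / 2"
  have e: "e > 0" using ddm1 e_def by auto
  have "\<exists>d>0. \<forall>x\<in>{-1..1}. dist x (-1) < d \<longrightarrow> dist (\<Phi>'' x) (\<Phi>'' (-1)) < e"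
    using d2c e unfolding continuous_on_iff by force
  then obtain d where d: "d > 0" "\<And>x. x \<in> {-1..1} \<Longrightarrow> dist x (-1) < d \<Longrightarrow> dist (\<Phi>'' x) (\<Phi>'' (-1)) < e"
    by blast
  define \<delta> where "\<delta> = min (d/2) 1"
  have \<delta>: "\<delta> > 0" "\<delta> \<le> 1" "\<delta> < d" using d by (auto simp: \<delta>_def)
  have bd: "\<Phi>'' x \<le> 1 - e" if "x \<in> {-1..-1+\<delta>}" for x
  proof -
    have "x \<in> {-1..1}" "dist x (-1) < d" using that \<delta> by (auto simp: dist_real_def)
    from d(2)[OF this] have "\<bar>\<Phi>'' x - \<Phi>'' (-1)\<bar> < e" by (simp add: dist_real_def)
    hence "\<Phi>'' x - \<Phi>'' (-1) < e" by (metis abs_less_iff)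
    thus ?thesis by (simp add: e_def field_simps)
  qed
  have j: "v - \<Phi>' v - e * (1 + v) \<ge> 0" if v: "v \<in> {-1..-1+\<delta>}" for v
  proof -
    have bd': "0 \<le> 1 - \<Phi>'' x - e" if "-1 < x" "x < v" for x using bd[of x] that v by auto
    have "(\<lambda>v. v - \<Phi>' v - e * (1 + v)) (-1) \<le> (\<lambda>v. v - \<Phi>' v - e * (1 + v)) v"
      by (rule incr_helper[of "-1" v "\<lambda>v. v - \<Phi>' v - e * (1 + v)" "\<lambda>x. 1 - \<Phi>'' x - e"])
         (use v \<delta> bd' in \<open>auto intro!: derivative_eq_intros d2\<close>)
    thus ?thesis using dm1 by simp
  qed
  have k: "GG w \<ge> e/2 * (1 + w)\<^sup>2" if w: "w \<in> {-1..-1+\<delta>}" for w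
  proof -
    have "(\<lambda>w. GG w - e/2 * (1 + w)\<^sup>2) (-1) \<le> (\<lambda>w. GG w - e/2 * (1 + w)\<^sup>2) w"
      by (rule incr_helper[of "-1" w "\<lambda>w. GG w - e/2 * (1 + w)\<^sup>2" "\<lambda>x. x - \<Phi>' x - e * (1 + x)"])
         (use w \<delta> j in \<open>auto intro!: derivative_eq_intros dGG simp: field_simps\<close>)
    moreover have "GG (-1) = 0" using sym by (simp add: GG_def)
    ultimately show ?thesis by simp
  qed
  show ?thesis using that[of \<delta> "e/2"] \<delta> e k by auto
qed

lemma GG_lower: obtains c where "c > 0"
  "\<And>w. w \<in> {0..1} \<Longrightarrow> GG w \<ge> c * (1 - w)\<^sup>2"
  "\<And>w. w \<in> {-1..0} \<Longrightarrow> GG w \<ge> c * (1 + w)\<^sup>2"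
proof -
  obtain d1 e1 where A: "d1 > 0" "e1 > 0" "d1 \<le> 1" "\<And>w. w \<in> {1-d1..1} \<Longrightarrow> GG w \<ge> e1 * (1 - w)\<^sup>2"
    using near1 by blast
  obtain d2 e2 where B: "d2 > 0" "e2 > 0" "d2 \<le> 1" "\<And>w. w \<in> {-1..-1+d2} \<Longrightarrow> GG w \<ge> e2 * (1 + w)\<^sup>2"
    using nearm1 by blast
  define \<delta> where "\<delta> = min d1 d2"
  have \<delta>: "\<delta> > 0" "\<delta> \<le> 1" using A B by (auto simp: \<delta>_def)
  have "{-1+\<delta>..1-\<delta>} \<noteq> {}" using \<delta> by simp
  moreover have "continuous_on {-1+\<delta>..1-\<delta>} GG" by (rule continuous_on_subset[OF GG_cont]) (use \<delta> in auto)
  ultimately have "\<exists>x\<in>{-1+\<delta>..1-\<delta>}. \<forall>y\<in>{-1+\<delta>..1-\<delta>}. GG x \<le> GG y"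
    by (intro continuous_attains_inf) auto
  then obtain x0 where x0: "x0 \<in> {-1+\<delta>..1-\<delta>}" "\<And>y. y \<in> {-1+\<delta>..1-\<delta>} \<Longrightarrow> GG x0 \<le> GG y"
    by blast
  define m where "m = GG x0"
  have x0b: "-1 + \<delta> \<le> x0" "x0 \<le> 1 - \<delta>" using x0(1) by auto
  have "x0 \<in> {-1<..<1}" using x0b \<delta>(1) by simp
  hence m: "m > 0" unfolding m_def by (rule GG_pos)
  define c where "c = min m (min e1 e2)"
  have c: "c > 0" using m A B by (auto simp: c_def)
  show ?thesis
  proof (rule that[OF c])
    fix w :: real assume w: "w \<in> {0..1}"
    show "GG w \<ge> c * (1 - w)\<^sup>2"
    proof (cases "w \<ge> 1 - d1")
      case True
      hence "GG w \<ge> e1 * (1 - w)\<^sup>2" using A w by auto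
      moreover have "c * (1 - w)\<^sup>2 \<le> e1 * (1 - w)\<^sup>2" by (rule mult_right_mono) (auto simp: c_def)
      ultimately show ?thesis by linarith
    next
      case False
      hence "w \<in> {-1+\<delta>..1-\<delta>}" using w \<delta> by (auto simp: \<delta>_def)
      hence "GG w \<ge> m" using x0 m_def by auto
      moreover have "(1 - w)\<^sup>2 \<le> 1" using w by (intro power_le_one) auto
      moreover have "c \<le> m" "c > 0" using c by (auto simp: c_def)
      moreover have "c * (1 - w)\<^sup>2 \<le> m * (1 - w)\<^sup>2" by (rule mult_right_mono) (auto simp: c_def)
      moreover have "m * (1 - w)\<^sup>2 \<le> m" using m \<open>(1 - w)\<^sup>2 \<le> 1\<close> by (simp add: mult_left_le)
      ultimately show ?thesis by linarith
    qed
  next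
    fix w :: real assume w: "w \<in> {-1..0}"
    show "GG w \<ge> c * (1 + w)\<^sup>2"
    proof (cases "w \<le> -1 + d2")
      case True
      hence "GG w \<ge> e2 * (1 + w)\<^sup>2" using B w by auto
      moreover have "c * (1 + w)\<^sup>2 \<le> e2 * (1 + w)\<^sup>2" by (rule mult_right_mono) (auto simp: c_def)
      ultimately show ?thesis by linarith
    next
      case False
      hence "w \<in> {-1+\<delta>..1-\<delta>}" using w \<delta> by (auto simp: \<delta>_def)
      hence "GG w \<ge> m" using x0 m_def by auto
      moreover have "(1 + w)\<^sup>2 \<le> 1" using w by (intro power_le_one) auto
      moreover have "c \<le> m" "c > 0" using c by (auto simp: c_def)
      moreover have "c * (1 + w)\<^sup>2 \<le> m * (1 + w)\<^sup>2" by (rule mult_right_mono) (auto simp: c_def)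
      moreover have "m * (1 + w)\<^sup>2 \<le> m" using m \<open>(1 + w)\<^sup>2 \<le> 1\<close> by (simp add: mult_left_le)
      ultimately show ?thesis by linarith
    qed
  qed
qed


lemma pw:
  fixes s w u a D T c :: real
  assumes s: "(s = 1 \<and> 0 \<le> w \<and> w \<le> 1) \<or> (s = -1 \<and> -1 \<le> w \<and> w \<le> 0)"
    and u: "u \<in> {-1..1}" "\<bar>w - u\<bar> \<le> D"
    and a: "\<bar>\<Phi> a - \<Phi> s\<bar> \<le> T"
    and c: "c > 0" "\<And>w. w \<in> {0..1} \<Longrightarrow> GG w \<ge> c * (1 - w)\<^sup>2"
      "\<And>w. w \<in> {-1..0} \<Longrightarrow> GG w \<ge> c * (1 + w)\<^sup>2"
  shows "c * (s - w)\<^sup>2 - (D + T) \<le> (1/2 * w\<^sup>2 - \<Phi> u) - (1/2 * s\<^sup>2 - \<Phi> a)"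
    "\<bar>(1/2 * w\<^sup>2 - \<Phi> u) - (1/2 * s\<^sup>2 - \<Phi> a)\<bar> \<le> (s - w)\<^sup>2 / 2 + (D + T)"
proof -
  have w: "w \<in> {-1..1}" using s by auto
  have s2: "s\<^sup>2 = 1" "\<Phi> s = \<Phi> 1" using s sym by auto
  have id: "(1/2 * w\<^sup>2 - \<Phi> u) - (1/2 * s\<^sup>2 - \<Phi> a) = GG w + (\<Phi> w - \<Phi> u) + (\<Phi> a - \<Phi> s)"
    unfolding GG_def using s2 by simp
  have l: "\<bar>\<Phi> w - \<Phi> u\<bar> \<le> D" using Phi_lip[OF w u(1)] u(2) by linarith
  have g: "c * (s - w)\<^sup>2 \<le> GG w \<and> GG w \<le> (s - w)\<^sup>2 / 2"
    using s
  proof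
    assume h: "s = 1 \<and> 0 \<le> w \<and> w \<le> 1"
    thus ?thesis using c(2)[of w] GG_upper1[of w] by auto
  next
    assume h: "s = -1 \<and> -1 \<le> w \<and> w \<le> 0"
    have "(-1 - w)\<^sup>2 = (1 + w)\<^sup>2" by (simp add: power2_eq_square algebra_simps)
    thus ?thesis using h c(3)[of w] GG_upper2[of w] by auto
  qed
  have "0 \<le> c * (s - w)\<^sup>2" using c(1) by simp
  with id l a g show "c * (s - w)\<^sup>2 - (D + T) \<le> (1/2 * w\<^sup>2 - \<Phi> u) - (1/2 * s\<^sup>2 - \<Phi> a)"
    "\<bar>(1/2 * w\<^sup>2 - \<Phi> u) - (1/2 * s\<^sup>2 - \<Phi> a)\<bar> \<le> (s - w)\<^sup>2 / 2 + (D + T)"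
    by (auto simp: abs_le_iff)
qed

lemma Phi_comp_meas:
  fixes g :: "real \<Rightarrow> real"
  assumes [measurable]: "g \<in> borel_measurable lborel" and b: "\<And>x. \<bar>g x\<bar> \<le> 1"
  shows "(\<lambda>x. \<Phi> (g x)) \<in> borel_measurable lborel"
proof -
  define Pc where "Pc x = \<Phi> (max (-1) (min 1 x))" for x :: real
  have Pcont: "continuous_on {-1..1} \<Phi>" using DERIV_continuous_on[OF d1] by blast
  have "continuous_on UNIV Pc" unfolding Pc_def
    by (rule continuous_on_compose2[OF Pcont]) (auto intro!: continuous_intros)
  hence [measurable]: "Pc \<in> borel_measurable borel" by (rule borel_measurable_continuous_onI)
  have eq: "(\<lambda>x. \<Phi> (g x)) = (\<lambda>x. Pc (g x))"
    using b by (auto simp: Pc_def abs_le_iff intro!: ext)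
  show ?thesis unfolding eq by measurable
qed

lemma main_bound:
  obtains c where "c > 0" "\<And>W. W \<in> CC0 \<Longrightarrow> c * (LINT \<phi>|lborel. (Wsh \<phi> - W \<phi>)\<^sup>2) - 4 \<le> energyL \<Phi> W"
proof -
  obtain c where c: "c > 0" "\<And>w. w \<in> {0..1} \<Longrightarrow> GG w \<ge> c * (1 - w)\<^sup>2"
      "\<And>w. w \<in> {-1..0} \<Longrightarrow> GG w \<ge> c * (1 + w)\<^sup>2"
    using GG_lower by blast
  show ?thesis
  proof (rule that[OF c(1)])
    fix W assume W: "W \<in> CC0"
    have Wm[measurable]: "W \<in> borel_measurable lborel" and iW: "integrable lborel (\<lambda>\<phi>. (Wsh \<phi> - W \<phi>)\<^sup>2)"
      using W by (auto simp: CC0_def CC_def HH_def)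
    obtain f where fm0: "mono f" and AEf: "AE \<phi> in lborel. W \<phi> = f \<phi>"
      and fl: "(f \<longlongrightarrow> 1) at_top" "(f \<longlongrightarrow> -1) at_bot"
      using W by (auto simp: CC0_def CC_def)
    have sgnW: "AE \<phi> in lborel. \<phi> \<ge> 0 \<longrightarrow> 0 \<le> W \<phi> \<and> W \<phi> \<le> 1"
      "AE \<phi> in lborel. \<phi> \<le> 0 \<longrightarrow> -1 \<le> W \<phi> \<and> W \<phi> \<le> 0"
      using W by (auto simp: CC0_def)
    have fb: "\<bar>f x\<bar> \<le> 1" for x using mono_bounded[OF fm0 fl, of x] by (simp add: abs_le_iff)
    have fm[measurable]: "f \<in> borel_measurable lborel" using meas_mono[OF fm0] .
    have ae1: "AE \<phi> in lborel. \<phi> \<ge> 0 \<longrightarrow> 0 \<le> f \<phi>" using AEf sgnW(1) by eventually_elim auto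
    have ae2: "AE \<phi> in lborel. \<phi> \<le> 0 \<longrightarrow> f \<phi> \<le> 0" using AEf sgnW(2) by eventually_elim auto
    have fpos: "0 \<le> f \<phi>" if phi: "\<phi> > 0" for \<phi>
    proof -
      obtain x where x: "x \<in> {0<..<\<phi>}" "x \<ge> 0 \<longrightarrow> 0 \<le> f x" using AE_exists_in[OF ae1 phi] by blast
      have "f x \<le> f \<phi>" using x(1) by (intro monoD[OF fm0]) auto
      with x show ?thesis by auto
    qed
    have fneg: "f \<phi> \<le> 0" if phi: "\<phi> < 0" for \<phi>
    proof -
      obtain x where x: "x \<in> {\<phi><..<0}" "x \<le> 0 \<longrightarrow> f x \<le> 0" using AE_exists_in[OF ae2 phi] by blast
      have "f \<phi> \<le> f x" using x(1) by (intro monoD[OF fm0]) auto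
      with x show ?thesis by auto
    qed
    have avgW: "avgA W = avgA f"
    proof
      fix \<phi>
      show "avgA W \<phi> = avgA f \<phi>" unfolding avgA_def
        by (rule set_lebesgue_integral_cong_AE) (use AEf in auto)
    qed
    define u where "u = avgA f"
    define a where "a = avgA Wsh"
    have um0: "mono u" unfolding u_def by (rule avg_mono[OF fm0 fb])
    have am0: "mono a" unfolding a_def by (rule avg_mono[OF Wsh_mono Wsh_bound])
    have um[measurable]: "u \<in> borel_measurable lborel" using meas_mono[OF um0] .
    have am[measurable]: "a \<in> borel_measurable lborel" using meas_mono[OF am0] .
    have ub: "\<bar>u x\<bar> \<le> 1" for x
      using avg_bounds[OF fm0 fb, of x] fb[of "x - 1/2"] fb[of "x + 1/2"] unfolding u_def by (simp add: abs_le_iff)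
    have ab: "\<bar>a x\<bar> \<le> 1" for x
      using avg_bounds[OF Wsh_mono Wsh_bound, of x] Wsh_bound[of "x - 1/2"] Wsh_bound[of "x + 1/2"]
      unfolding a_def by (simp add: abs_le_iff)
    have Pu[measurable]: "(\<lambda>x. \<Phi> (u x)) \<in> borel_measurable lborel" by (rule Phi_comp_meas[OF um ub])
    have Pa[measurable]: "(\<lambda>x. \<Phi> (a x)) \<in> borel_measurable lborel" by (rule Phi_comp_meas[OF am ab])
    have Wshm[measurable]: "Wsh \<in> borel_measurable lborel" using meas_mono[OF Wsh_mono] .
    define I where "I \<phi> = (1/2 * (f \<phi>)\<^sup>2 - \<Phi> (u \<phi>)) - (1/2 * (Wsh \<phi>)\<^sup>2 - \<Phi> (a \<phi>))" for \<phi>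
    define Q where "Q \<phi> = (Wsh \<phi> - f \<phi>)\<^sup>2" for \<phi>
    define D where "D \<phi> = f (\<phi> + 1/2) - f (\<phi> - 1/2)" for \<phi>
    define E where "E \<phi> = D \<phi> + 2 * indicator {-1/2..1/2} \<phi>" for \<phi>
    have Im[measurable]: "I \<in> borel_measurable lborel" unfolding I_def by measurable
    have Qm[measurable]: "Q \<in> borel_measurable lborel" unfolding Q_def by measurable
    have eL: "energyL \<Phi> W = (\<integral>\<phi>. I \<phi> \<partial>lborel)"
      unfolding energyL_def avgW u_def[symmetric] a_def[symmetric]
      by (rule integral_cong_AE) (measurable, use AEf in \<open>auto simp: I_def\<close>)
    have eQ: "(LINT \<phi>|lborel. (Wsh \<phi> - W \<phi>)\<^sup>2) = (\<integral>\<phi>. Q \<phi> \<partial>lborel)"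
      by (rule integral_cong_AE) (use AEf in \<open>auto simp: Q_def\<close>)
    have iQ: "integrable lborel Q"
    proof -
      have "integrable lborel (\<lambda>\<phi>. (Wsh \<phi> - W \<phi>)\<^sup>2) = integrable lborel Q"
        by (rule integrable_cong_AE) (use AEf in \<open>auto simp: Q_def\<close>)
      with iW show ?thesis by simp
    qed
    have iD: "integrable lborel D" and intD: "(\<integral>\<phi>. D \<phi> \<partial>lborel) \<le> 2"
      using D_integrable[OF fm0 fb] unfolding D_def by auto
    have iInd: "integrable lborel (\<lambda>\<phi>. 2 * indicator {-1/2..1/2::real} \<phi> :: real)"
      by (intro integrable_mult_right integrable_real_indicator) auto
    have iE: "integrable lborel E" unfolding E_def using iD iInd by simp
    have intE: "(\<integral>\<phi>. E \<phi> \<partial>lborel) \<le> 4"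
    proof -
      have "(\<integral>\<phi>. E \<phi> \<partial>lborel) = (\<integral>\<phi>. D \<phi> \<partial>lborel) + (\<integral>\<phi>. 2 * indicator {-1/2..1/2::real} \<phi> \<partial>lborel)"
        unfolding E_def by (rule Bochner_Integration.integral_add[OF iD iInd])
      also have "(\<integral>\<phi>. 2 * indicator {-1/2..1/2::real} \<phi> \<partial>lborel) = (2::real)"
        by (simp add: measure_def)
      finally show ?thesis using intD by simp
    qed
    have pt: "c * Q \<phi> - E \<phi> \<le> I \<phi> \<and> \<bar>I \<phi>\<bar> \<le> Q \<phi> / 2 + E \<phi>" if "\<phi> \<noteq> 0" for \<phi>
    proof -
      have s: "(Wsh \<phi> = 1 \<and> 0 \<le> f \<phi> \<and> f \<phi> \<le> 1) \<or> (Wsh \<phi> = -1 \<and> -1 \<le> f \<phi> \<and> f \<phi> \<le> 0)"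
      proof (cases "\<phi> > 0")
        case True thus ?thesis using fpos[OF True] fb[of \<phi>] by (auto simp: Wsh_def abs_le_iff)
      next
        case False hence "\<phi> < 0" using that by auto
        thus ?thesis using fneg[of \<phi>] fb[of \<phi>] by (auto simp: Wsh_def abs_le_iff)
      qed
      have uu: "u \<phi> \<in> {-1..1}" using ub[of \<phi>] by (auto simp: abs_le_iff)
      have fD: "\<bar>f \<phi> - u \<phi>\<bar> \<le> D \<phi>"
      proof -
        have "f (\<phi> - 1/2) \<le> f \<phi>" "f \<phi> \<le> f (\<phi> + 1/2)" by (auto intro!: monoD[OF fm0])
        with avg_bounds[OF fm0 fb, of \<phi>] show ?thesis unfolding u_def D_def by (auto simp: abs_le_iff)
      qed
      have aT: "\<bar>\<Phi> (a \<phi>) - \<Phi> (Wsh \<phi>)\<bar> \<le> 2 * indicator {-1/2..1/2} \<phi>"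
      proof (cases "\<bar>\<phi>\<bar> > 1/2")
        case True
        hence "a \<phi> = Wsh \<phi>" unfolding a_def by (rule avg_Wsh)
        thus ?thesis by simp
      next
        case False
        hence ind: "indicator {-1/2..1/2::real} \<phi> = (1::real)" by (auto simp: indicator_def abs_le_iff)
        have "a \<phi> \<in> {-1..1}" "Wsh \<phi> \<in> {-1..1}" using ab[of \<phi>] Wsh_bound[of \<phi>] by (auto simp: abs_le_iff)
        from Phi_lip[OF this] have "\<bar>\<Phi> (a \<phi>) - \<Phi> (Wsh \<phi>)\<bar> \<le> \<bar>a \<phi> - Wsh \<phi>\<bar>" .
        also have "\<dots> \<le> 2" using ab[of \<phi>] Wsh_bound[of \<phi>] by (simp add: abs_le_iff)
        finally show ?thesis using ind by simp
      qed
      from pw[OF s uu fD aT c] show ?thesis unfolding I_def Q_def E_def by simp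
    qed
    have AEpt: "AE \<phi> in lborel. c * Q \<phi> - E \<phi> \<le> I \<phi> \<and> \<bar>I \<phi>\<bar> \<le> Q \<phi> / 2 + E \<phi>"
      using AE_lborel_singleton[of 0] by eventually_elim (use pt in auto)
    have iMaj: "integrable lborel (\<lambda>\<phi>. Q \<phi> / 2 + E \<phi>)" using iQ iE by simp
    have iI: "integrable lborel I"
    proof (rule Bochner_Integration.integrable_bound[OF iMaj Im])
      show "AE x in lborel. norm (I x) \<le> norm (Q x / 2 + E x)"
        using AEpt by eventually_elim auto
    qed
    have iLow: "integrable lborel (\<lambda>\<phi>. c * Q \<phi> - E \<phi>)" using iQ iE by simp
    have "(\<integral>\<phi>. c * Q \<phi> - E \<phi> \<partial>lborel) \<le> (\<integral>\<phi>. I \<phi> \<partial>lborel)"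
      by (rule integral_mono_AE[OF iLow iI]) (use AEpt in \<open>eventually_elim, auto\<close>)
    moreover have "(\<integral>\<phi>. c * Q \<phi> - E \<phi> \<partial>lborel) = c * (\<integral>\<phi>. Q \<phi> \<partial>lborel) - (\<integral>\<phi>. E \<phi> \<partial>lborel)"
      using iQ iE by simp
    ultimately show "c * (LINT \<phi>|lborel. (Wsh \<phi> - W \<phi>)\<^sup>2) - 4 \<le> energyL \<Phi> W"
      unfolding eL eQ using intE by linarith
  qed
qed

end

theorem corollary3p13:
  fixes \<Phi> \<Phi>' \<Phi>'' :: "real \<Rightarrow> real"
  assumes d1: "\<And>x. x \<in> {-1..1} \<Longrightarrow> (\<Phi> has_real_derivative \<Phi>' x) (at x within {-1..1})"
      and d2: "\<And>x. x \<in> {-1..1} \<Longrightarrow> (\<Phi>' has_real_derivative \<Phi>'' x) (at x within {-1..1})"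
      and d2c: "continuous_on {-1..1} \<Phi>''"
      and dm1: "\<Phi>' (-1) = -1"
      and dp1: "\<Phi>' 1 = 1"
      and conv: "\<And>x. x \<in> {-1..1} \<Longrightarrow> \<Phi>'' x \<ge> 0"
      and sym: "\<Phi> (-1) = \<Phi> 1"
      and ddm1: "\<Phi>'' (-1) < 1"
      and ddp1: "\<Phi>'' 1 < 1"
      and gpos: "\<And>w. w \<in> {-1<..<1} \<Longrightarrow> integral {-1..w} (\<lambda>v. v - \<Phi>' v) > 0"
  shows "\<forall>c1::real. \<exists>c2>0. \<forall>W \<in> CC0. energyL \<Phi> W \<le> c1 \<longrightarrow> dist_sh W \<le> c2"
proof
  fix c1 :: real
  obtain c where c: "c > 0" "\<And>W. W \<in> CC0 \<Longrightarrow> c * (LINT \<phi>|lborel. (Wsh \<phi> - W \<phi>)\<^sup>2) - 4 \<le> energyL \<Phi> W"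
    using main_bound[OF d1 d2 d2c dm1 dp1 conv sym ddm1 ddp1 gpos] by blast
  define c2 where "c2 = sqrt (max 1 ((c1 + 4) / c))"
  have c2: "c2 > 0" unfolding c2_def by simp
  show "\<exists>c2>0. \<forall>W \<in> CC0. energyL \<Phi> W \<le> c1 \<longrightarrow> dist_sh W \<le> c2"
  proof (intro exI conjI ballI impI)
    show "c2 > 0" by (rule c2)
  next
    fix W assume W: "W \<in> CC0" and e: "energyL \<Phi> W \<le> c1"
    define Q where "Q = (LINT \<phi>|lborel. (Wsh \<phi> - W \<phi>)\<^sup>2)"
    have "c * Q \<le> c1 + 4" using c(2)[OF W] e unfolding Q_def by linarith
    hence "Q \<le> (c1 + 4) / c" using c(1) by (simp add: pos_le_divide_eq mult.commute)
    hence "Q \<le> max 1 ((c1 + 4) / c)" by linarith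
    hence "sqrt Q \<le> c2" unfolding c2_def by (rule real_sqrt_le_mono)
    thus "dist_sh W \<le> c2" unfolding dist_sh_def Q_def .
  qed
qed

end
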